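(* Let $\{m_k:k\ge0\}$ be any sequence of positive reals with $\sum_k m_k=\infty$ and $m_k\to0$; let $S_0=0$ and $S_{k+1}=\sum_{i=0}^k m_i$. Define $f_j:(S_j,S_{j+1}]\to\mathbb{R}$, $j\ge0$, recursively with $c_0=0$ and $c_j=f_{j-1}(S_j)$ for $j\ge1$, by $$f_j(x)=\begin{cases}-x+S_j+c_j & x\in(S_j,S_j+\tfrac{m_j}{16})\\ \tfrac{8}{m_j}(x-S_j-\tfrac{m_j}{8})^2-\tfrac{3m_j}{32}+c_j & x\in[S_j+\tfrac{m_j}{16},S_j+\tfrac{3m_j}{16})\\ -\tfrac{5m_j}{16}\exp\!\big(\tfrac{5m_j/16}{x-S_j-m_j/2}+1\big)+\tfrac{m_j}{4}+c_j & x\in[S_j+\tfrac{3m_j}{16},S_j+\tfrac{m_j}{2})\\ \tfrac{m_j}{4}+c_j & x=S_j+\tfrac{m_j}{2}\\ \tfrac{5m_j}{16}\exp\!\big(\tfrac{-5m_j/16}{x-S_j-m_j/2}+1\big)+\tfrac{m_j}{4}+c_j & x\in(S_j+\tfrac{m_j}{2},S_j+\tfrac{13m_j}{16})\\ -\tfrac{8}{m_j}(x-S_j-\tfrac{7m_j}{8})^2+\tfrac{19m_j}{32}+c_j & x\in[S_j+\tfrac{13m_j}{16},S_j+\tfrac{15m_j}{16})\\ -x+S_j+\tfrac{3m_j}{2}+c_j & x\in[S_j+\tfrac{15m_j}{16},S_{j+1}],\end{cases}$$ and define $F:\mathbb{R}\to\mathbb{R}$ by $F(x)=-x$ for $x\le0$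 and $F(x)=f_j(x)$ for $x\in(S_j,S_{j+1}]$. Let $x_0=0$ and $x_{k+1}=x_k-M_k\dot F(x_k)$ with $M_k=m_kI$ (here $p=1$) for $k\ge0$. Then $\{M_k\}$ consists of symmetric positive definite matrices with $\sum_k\lambda_{\min}(M_k)=\infty$ and $\lambda_{\max}(M_k)\to0$. Moreover, (a) $\lim_k x_k=\infty$, (b) $\lim_k F(x_k)=\infty$, and (c) $\lim_k|\dot F(x_k)|=1$.
   Context: $\dot F$ denotes the derivative of $F$; $\lambda_{\min},\lambda_{\max}$ denote smallest and largest eigenvalues. *)

theory Defs
  imports "HOL-Analysis.Analysis"
begin

definition Ssum :: "(nat \<Rightarrow> real) \<Rightarrow> nat \<Rightarrow> real" where
  "Ssum m k = (\<Sum>i<k. m i)"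

text \<open>The piece f_j, with parameters mj = m_j, Sj = S_j, cj = c_j; meant on (S_j, S_j + m_j].\<close>
definition fpiece :: "real \<Rightarrow> real \<Rightarrow> real \<Rightarrow> real \<Rightarrow> real" where
  "fpiece mj Sj cj x =
    (if x < Sj + mj/16 then - x + Sj + cj
     else if x < Sj + 3*mj/16 then (8/mj) * (x - Sj - mj/8)^2 - 3*mj/32 + cj
     else if x < Sj + mj/2 then
       - (5*mj/16) * exp ((5*mj/16) / (x - Sj - mj/2) + 1) + mj/4 + cj
     else if x = Sj + mj/2 then mj/4 + cj
     else if x < Sj + 13*mj/16 then
       (5*mj/16) * exp ((- 5*mj/16) / (x - Sj - mj/2) + 1) + mj/4 + cj
     else if x < Sj + 15*mj/16 then - (8/mj) * (x - Sj - 7*mj/8)^2 + 19*mj/32 + cj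
     else - x + Sj + 3*mj/2 + cj)"

primrec cconst :: "(nat \<Rightarrow> real) \<Rightarrow> nat \<Rightarrow> real" where
  "cconst m 0 = 0"
| "cconst m (Suc j) = fpiece (m j) (Ssum m j) (cconst m j) (Ssum m (Suc j))"

definition fj :: "(nat \<Rightarrow> real) \<Rightarrow> nat \<Rightarrow> real \<Rightarrow> real" where
  "fj m j x = fpiece (m j) (Ssum m j) (cconst m j) x"

definition Ffun :: "(nat \<Rightarrow> real) \<Rightarrow> real \<Rightarrow> real" where
  "Ffun m x = (if x \<le> 0 then - x
     else fj m (THE j. Ssum m j < x \<and> x \<le> Ssum m (Suc j)) x)"

text \<open>Iteration x_0 = 0, x_{k+1} = x_k - M_k F'(x_k), with M_k = m_k I (p = 1).\<close>
primrec xseq :: "(nat \<Rightarrow> real) \<Rightarrow> (real \<Rightarrow> real) \<Rightarrow> nat \<Rightarrow> real" where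
  "xseq m F 0 = 0"
| "xseq m F (Suc k) = xseq m F k - m k * deriv F (xseq m F k)"

definition Mmat :: "(nat \<Rightarrow> real) \<Rightarrow> nat \<Rightarrow> real^1^1" where
  "Mmat m k = mat (m k)"

definition eigvals :: "real^'n^'n \<Rightarrow> real set" where
  "eigvals A = {l. \<exists>v. v \<noteq> 0 \<and> A *v v = l *\<^sub>R v}"

definition lambda_min :: "real^'n^'n \<Rightarrow> real" where
  "lambda_min A = Inf (eigvals A)"

definition lambda_max :: "real^'n^'n \<Rightarrow> real" where
  "lambda_max A = Sup (eigvals A)"

definition sym_pos_def :: "real^'n^'n \<Rightarrow> bool" where
  "sym_pos_def A \<longleftrightarrow> transpose A = A \<and> (\<forall>v. v \<noteq> 0 \<longrightarrow> v \<bullet> (A *v v) > 0)"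

end

theory Submission
  imports Defs
begin

lemma mat_mulv: "(mat c :: real^'n^'n) *v v = c *\<^sub>R v"
proof -
  have "(\<Sum>j\<in>UNIV. (if i = j then c else 0) * v $ j) = c * v $ i" for i
  proof -
    have "(\<Sum>j\<in>UNIV. (if i = j then c else 0) * v $ j) = (\<Sum>j\<in>UNIV. if i = j then c * v $ j else 0)"
      by (rule sum.cong) auto
    then show ?thesis by simp
  qed
  then show ?thesis by (simp add: vec_eq_iff matrix_vector_mult_def mat_def)
qed

lemma eigvals_mat: "eigvals (mat c :: real^'n^'n) = {c}"
proof -
  have ne: "(1::real^'n) \<noteq> 0" by simp
  have "l = c" if "v \<noteq> 0" "c *\<^sub>R v = l *\<^sub>R v" for l and v :: "real^'n"
    using that by (metis scaleR_cancel_right)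
  then show ?thesis unfolding eigvals_def mat_mulv using ne by blast
qed

lemma Ssum_Suc: "Ssum m (Suc k) = Ssum m k + m k"
  by (simp add: Ssum_def)

lemma Ssum_0: "Ssum m 0 = 0"
  by (simp add: Ssum_def)

lemma Ssum_nonneg: "(\<And>k. m k > 0) \<Longrightarrow> Ssum m k \<ge> 0"
  unfolding Ssum_def by (simp add: less_imp_le sum_nonneg)

lemma Ssum_mono: "(\<And>k. m k > 0) \<Longrightarrow> strict_mono (Ssum m)"
  by (rule strict_mono_Suc_iff[THEN iffD2]) (simp add: Ssum_Suc)

lemma cconst_eq: "(\<And>k. m k > 0) \<Longrightarrow> cconst m k = Ssum m k / 2"
proof (induction k)
  case 0 then show ?case by (simp add: Ssum_0)
next
  case (Suc k)
  have p: "m k > 0" using Suc by auto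
  show ?case using Suc p by (simp add: Ssum_Suc fpiece_def)
qed

lemma THE_j:
  assumes pos: "\<And>k. m k > 0" and x: "Ssum m j < x" "x \<le> Ssum m (Suc j)"
  shows "(THE j. Ssum m j < x \<and> x \<le> Ssum m (Suc j)) = j"
proof (rule the_equality)
  show "Ssum m j < x \<and> x \<le> Ssum m (Suc j)" using x by auto
  fix i assume i: "Ssum m i < x \<and> x \<le> Ssum m (Suc i)"
  have sm: "strict_mono (Ssum m)" using pos by (rule Ssum_mono)
  show "i = j"
  proof (rule ccontr)
    assume "i \<noteq> j"
    then have "Suc i \<le> j \<or> Suc j \<le> i" by auto
    then show False
    proof
      assume "Suc i \<le> j"
      then have "Ssum m (Suc i) \<le> Ssum m j" using sm strict_mono_less_eq by blast
      then show False using i x by auto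
    next
      assume "Suc j \<le> i"
      then have "Ssum m (Suc j) \<le> Ssum m i" using sm strict_mono_less_eq by blast
      then show False using i x by auto
    qed
  qed
qed

lemma Ffun_in:
  assumes pos: "\<And>k. m k > 0" and x: "Ssum m j < x" "x \<le> Ssum m (Suc j)"
  shows "Ffun m x = fpiece (m j) (Ssum m j) (Ssum m j / 2) x"
proof -
  have "Ssum m j \<ge> 0" by (rule Ssum_nonneg[where m=m, OF pos])
  then have "x > 0" using x by auto
  then show ?thesis using THE_j[where m=m, OF pos x]
    by (simp add: Ffun_def fj_def cconst_eq[where m=m, OF pos])
qed

lemma local_lin:
  assumes pos: "\<And>k. m k > 0"
  shows "\<exists>e>0. \<forall>y. \<bar>y - Ssum m k\<bar> < e \<longrightarrow> Ffun m y = 3/2 * Ssum m k - y"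
proof (cases k)
  case 0
  have p: "m 0 > 0" using pos by auto
  show ?thesis
  proof (intro exI[of _ "m 0 / 16"] conjI allI impI)
    show "m 0 / 16 > 0" using p by simp
    fix y assume y: "\<bar>y - Ssum m k\<bar> < m 0 / 16"
    show "Ffun m y = 3/2 * Ssum m k - y"
    proof (cases "y \<le> 0")
      case True then show ?thesis using 0 by (simp add: Ffun_def Ssum_0)
    next
      case False
      then have "Ssum m 0 < y" "y \<le> Ssum m (Suc 0)" using y 0 p by (auto simp: Ssum_0 Ssum_Suc)
      have "y < m 0 / 16" using y 0 by (simp add: Ssum_0 abs_less_iff)
      with Ffun_in[where m=m, OF pos \<open>Ssum m 0 < y\<close> \<open>y \<le> Ssum m (Suc 0)\<close>] show ?thesis using 0 by (simp add: Ssum_0 fpiece_def)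
    qed
  qed
next
  case (Suc j)
  have p: "m j > 0" "m k > 0" using pos by auto
  show ?thesis
  proof (intro exI[of _ "min (m j / 16) (m k / 16)"] conjI allI impI)
    show "min (m j / 16) (m k / 16) > 0" using p by simp
    fix y assume y: "\<bar>y - Ssum m k\<bar> < min (m j / 16) (m k / 16)"
    show "Ffun m y = 3/2 * Ssum m k - y"
    proof (cases "y \<le> Ssum m k")
      case True
      then have "Ssum m j < y" "y \<le> Ssum m (Suc j)" using y Suc p by (auto simp: Ssum_Suc)
      from Ffun_in[where m=m, OF pos this] show ?thesis using y Suc p True by (auto simp: Ssum_Suc fpiece_def)
    next
      case False
      then have "Ssum m k < y" "y \<le> Ssum m (Suc k)" using y p by (auto simp: Ssum_Suc)
      from Ffun_in[where m=m, OF pos this] show ?thesis using y p False by (auto simp: Ssum_Suc fpiece_def)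
    qed
  qed
qed

lemma deriv_at:
  assumes pos: "\<And>k. m k > 0"
  shows "deriv (Ffun m) (Ssum m k) = -1" and "Ffun m (Ssum m k) = Ssum m k / 2"
proof -
  obtain e where e: "e > 0" "\<And>y. \<bar>y - Ssum m k\<bar> < e \<Longrightarrow> Ffun m y = 3/2 * Ssum m k - y"
    using local_lin[where m=m, OF pos, where k=k] by blast
  have d: "((\<lambda>y. 3/2 * Ssum m k - y) has_field_derivative -1) (at (Ssum m k))"
    by (auto intro!: derivative_eq_intros)
  have "(Ffun m has_field_derivative -1) (at (Ssum m k))"
    apply (rule has_field_derivative_transform_within_open[OF d, of "ball (Ssum m k) e"])
    using e by (auto simp: dist_real_def abs_minus_commute)
  then show "deriv (Ffun m) (Ssum m k) = -1" by (rule DERIV_imp_deriv)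
  show "Ffun m (Ssum m k) = Ssum m k / 2" using e by simp
qed

lemma xseq_eq:
  assumes pos: "\<And>k. m k > 0"
  shows "xseq m (Ffun m) k = Ssum m k"
  by (induction k) (simp_all add: Ssum_0 Ssum_Suc deriv_at[where m=m, OF pos])

theorem proposition5p4:
  fixes m :: "nat \<Rightarrow> real"
  assumes pos: "\<And>k. m k > 0"
    and div: "filterlim (\<lambda>n. \<Sum>k<n. m k) at_top sequentially"
    and lim0: "m \<longlonglongrightarrow> 0"
  shows "(\<forall>k. sym_pos_def (Mmat m k))
       \<and> filterlim (\<lambda>n. \<Sum>k<n. lambda_min (Mmat m k)) at_top sequentially
       \<and> (\<lambda>k. lambda_max (Mmat m k)) \<longlonglongrightarrow> 0
       \<and> filterlim (xseq m (Ffun m)) at_top sequentially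
       \<and> filterlim (\<lambda>k. Ffun m (xseq m (Ffun m) k)) at_top sequentially
       \<and> (\<lambda>k. \<bar>deriv (Ffun m) (xseq m (Ffun m) k)\<bar>) \<longlonglongrightarrow> 1"
proof -
  have lmin: "lambda_min (Mmat m k) = m k" for k
    by (simp add: lambda_min_def Mmat_def eigvals_mat)
  have lmax: "lambda_max (Mmat m k) = m k" for k
    by (simp add: lambda_max_def Mmat_def eigvals_mat)
  have spd: "sym_pos_def (Mmat m k)" for k
  proof -
    have "v \<bullet> (Mmat m k *v v) > 0" if "v \<noteq> 0" for v :: "real^1"
      using that pos[of k] by (simp add: Mmat_def mat_mulv)
    then show ?thesis by (simp add: sym_pos_def_def Mmat_def)
  qed
  have S: "filterlim (Ssum m) at_top sequentially"
    using div by (simp add: Ssum_def[abs_def])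
  have S2: "filterlim (\<lambda>k. Ssum m k / 2) at_top sequentially"
    unfolding filterlim_at_top
  proof
    fix Z :: real
    have "eventually (\<lambda>k. 2 * Z \<le> Ssum m k) sequentially"
      using S unfolding filterlim_at_top by blast
    then show "eventually (\<lambda>k. Z \<le> Ssum m k / 2) sequentially"
      by (rule eventually_mono) simp
  qed
  have xs: "xseq m (Ffun m) = Ssum m" by (rule ext) (rule xseq_eq[where m=m, OF pos])
  show ?thesis
    using spd div lim0 S S2
    by (simp add: lmin lmax xs deriv_at[where m=m, OF pos])
qed

end
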